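(* Let $(E,\mathcal P)$ be a random locally convex module over $K$ with base $(\Omega,\mathcal F,P)$ such that $\mathcal F$ has at least one $P$-atom, and let $f:E\to L^0(\mathcal F,K)$ be a module homomorphism. Then $f\in E^\ast_{min}$ (i.e. $f$ is continuous from $(E,\mathcal T_{\varepsilon,\lambda})$ to $(L^0(\mathcal F,K),\mathcal T_c)$) if and only if there exist finitely many $P$-atoms $A_1,\dots,A_n$, elements $\xi_1,\dots,\xi_n\in L^0_+$ and $\mathcal Q_1,\dots,\mathcal Q_n\in\mathcal F(\mathcal P)$ such that $$|f(x)|\le\sum_{i=1}^{n}\tilde I_{A_i}\,\xi_i\,\|x\|_{\mathcal Q_i}\quad\text{for all }x\in E.$$
   Context: $(\Omega,\mathcal{F},P)$ is a probability space, $K=\mathbb{R}$ or $\mathbb{C}$, $L^{0}(\mathcal{F},K)$ is the algebra of equivalence classes (mod a.s. equality) of $K$-valued measurable random variables, ordered a.s.; $L^0_+$ the nonnegative ones, $L^0_{++}$ those $>0$ a.s.; $\tilde I_A$ is the class of the indicator of $A$. An $L^0$-seminorm on a left $L^0(\mathcal F,K)$-module $E$ is $\|\cdot\|:E\to L^0_+$ with $\|x+y\|\le\|x\|+\|y\|$ and $\|\xi x\|=|\xi|\|x\|$. A random locally convex module $(E,\mathcal P)$ is a left $L^0(\mathcal F,K)$-module with a family $\mathcal P$ of $L^0$-seminorms such that $\bigvee_{\|\cdot\|\in\mathcal P}\|x\|=0$ implies $x=0$. $\mathcal F(\mathcal P)$ is the set of finite subfamilies of $\mathcal P$, and $\|x\|_{\mathcal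 Q}=\bigvee_{\|\cdot\|\in\mathcal Q}\|x\|$. $\mathcal T_{\varepsilon,\lambda}$ on $E$ has local base at $0$ the sets $\{x:P\{\omega:\|x\|_{\mathcal Q}(\omega)<\varepsilon\}>1-\lambda\}$ ($\mathcal Q\in\mathcal F(\mathcal P)$, $\varepsilon>0$, $0<\lambda<1$). $\mathcal T_c$ on $E$: $G$ open iff for each $x\in G$ there are $\mathcal Q\in\mathcal F(\mathcal P)$, $\varepsilon\in L^0_{++}$ with $x+\{y:\|y\|_{\mathcal Q}\le\varepsilon\}\subset G$. $L^0(\mathcal F,K)$ is regarded as a random locally convex module with $\mathcal P=\{|\cdot|\}$. A $P$-atom is $A\in\mathcal F$ with $P(A)>0$ such that every measurable $B\subset A$ has $P(B)=0$ or $P(A\setminus B)=0$. *)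

theory Defs
  imports "HOL-Probability.Probability"
begin

text \<open>L0(F,K): represented by measurable K-valued functions; equality of classes is a.e. equality.\<close>

definition L0 :: "'a measure \<Rightarrow> ('a \<Rightarrow> 'k::real_normed_field) set" where
  "L0 M = borel_measurable M"

definition aeq :: "'a measure \<Rightarrow> ('a \<Rightarrow> 'b) \<Rightarrow> ('a \<Rightarrow> 'b) \<Rightarrow> bool" where
  "aeq M f g \<longleftrightarrow> (AE \<omega> in M. f \<omega> = g \<omega>)"

text \<open>Left L0(F,K)-module structure on the abelian group 'e, scalar multiplication smul,
  which must depend only on the class of the scalar.\<close>

definition L0_module :: "'a measure \<Rightarrow> (('a \<Rightarrow> 'k::real_normed_field) \<Rightarrow> 'e::ab_group_add \<Rightarrow> 'e) \<Rightarrow> bool" where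
  "L0_module M smul \<longleftrightarrow>
     (\<forall>\<xi>\<in>L0 M. \<forall>\<eta>\<in>L0 M. aeq M \<xi> \<eta> \<longrightarrow> (\<forall>x. smul \<xi> x = smul \<eta> x)) \<and>
     (\<forall>\<xi>\<in>L0 M. \<forall>x y. smul \<xi> (x + y) = smul \<xi> x + smul \<xi> y) \<and>
     (\<forall>\<xi>\<in>L0 M. \<forall>\<eta>\<in>L0 M. \<forall>x. smul (\<lambda>\<omega>. \<xi> \<omega> + \<eta> \<omega>) x = smul \<xi> x + smul \<eta> x) \<and>
     (\<forall>\<xi>\<in>L0 M. \<forall>\<eta>\<in>L0 M. \<forall>x. smul (\<lambda>\<omega>. \<xi> \<omega> * \<eta> \<omega>) x = smul \<xi> (smul \<eta> x)) \<and>
     (\<forall>x. smul (\<lambda>_. 1) x = x)"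

definition L0_seminorm :: "'a measure \<Rightarrow> (('a \<Rightarrow> 'k::real_normed_field) \<Rightarrow> 'e::ab_group_add \<Rightarrow> 'e)
    \<Rightarrow> ('e \<Rightarrow> 'a \<Rightarrow> real) \<Rightarrow> bool" where
  "L0_seminorm M smul N \<longleftrightarrow>
     (\<forall>x. N x \<in> borel_measurable M \<and> (AE \<omega> in M. 0 \<le> N x \<omega>)) \<and>
     (\<forall>x y. AE \<omega> in M. N (x + y) \<omega> \<le> N x \<omega> + N y \<omega>) \<and>
     (\<forall>\<xi>\<in>L0 M. \<forall>x. AE \<omega> in M. N (smul \<xi> x) \<omega> = norm (\<xi> \<omega>) * N x \<omega>)"

text \<open>Random locally convex module (E, Ps); the separation axiom
  "sup over Ps of the seminorms of x is 0 implies x = 0" is written out: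
  the supremum of a family in L0_+ is 0 iff each member is 0 a.s.\<close>

definition random_lc_module :: "'a measure \<Rightarrow> (('a \<Rightarrow> 'k::real_normed_field) \<Rightarrow> 'e::ab_group_add \<Rightarrow> 'e)
    \<Rightarrow> ('e \<Rightarrow> 'a \<Rightarrow> real) set \<Rightarrow> bool" where
  "random_lc_module M smul Ps \<longleftrightarrow>
     L0_module M smul \<and> (\<forall>N\<in>Ps. L0_seminorm M smul N) \<and>
     (\<forall>x. (\<forall>N\<in>Ps. AE \<omega> in M. N x \<omega> = 0) \<longrightarrow> x = 0)"

definition normQ :: "('e \<Rightarrow> 'a \<Rightarrow> real) set \<Rightarrow> 'e \<Rightarrow> 'a \<Rightarrow> real" where
  "normQ Q x \<omega> = Max (insert 0 ((\<lambda>N. N x \<omega>) ` Q))"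

definition Teps_open :: "'a measure \<Rightarrow> ('e::ab_group_add \<Rightarrow> 'a \<Rightarrow> real) set \<Rightarrow> 'e set \<Rightarrow> bool" where
  "Teps_open M Ps G \<longleftrightarrow>
     (\<forall>x\<in>G. \<exists>Q \<epsilon> lam. finite Q \<and> Q \<subseteq> Ps \<and> 0 < \<epsilon> \<and> 0 < lam \<and> lam < 1 \<and>
        (\<forall>y. measure M {\<omega> \<in> space M. normQ Q y \<omega> < \<epsilon>} > 1 - lam \<longrightarrow> x + y \<in> G))"

text \<open>Open sets of the locally L0-convex topology T_c on L0(F,K) (seminorm family the absolute
  value); open sets are sets of equivalence classes, i.e. saturated sets of representatives.\<close>

definition Tc_open :: "'a measure \<Rightarrow> ('a \<Rightarrow> 'k::real_normed_field) set \<Rightarrow> bool" where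
  "Tc_open M G \<longleftrightarrow> G \<subseteq> L0 M \<and>
     (\<forall>g\<in>G. \<forall>h\<in>L0 M. aeq M g h \<longrightarrow> h \<in> G) \<and>
     (\<forall>g\<in>G. \<exists>\<epsilon>\<in>borel_measurable M. (AE \<omega> in M. 0 < \<epsilon> \<omega>) \<and>
        (\<forall>h\<in>L0 M. (AE \<omega> in M. norm (h \<omega> - g \<omega>) \<le> \<epsilon> \<omega>) \<longrightarrow> h \<in> G))"

definition L0_hom :: "'a measure \<Rightarrow> (('a \<Rightarrow> 'k::real_normed_field) \<Rightarrow> 'e::ab_group_add \<Rightarrow> 'e)
    \<Rightarrow> ('e \<Rightarrow> 'a \<Rightarrow> 'k) \<Rightarrow> bool" where
  "L0_hom M smul f \<longleftrightarrow> (\<forall>x. f x \<in> L0 M) \<and>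
     (\<forall>x y. aeq M (f (x + y)) (\<lambda>\<omega>. f x \<omega> + f y \<omega>)) \<and>
     (\<forall>\<xi>\<in>L0 M. \<forall>x. aeq M (f (smul \<xi> x)) (\<lambda>\<omega>. \<xi> \<omega> * f x \<omega>))"

definition in_min_dual :: "'a measure \<Rightarrow> ('e::ab_group_add \<Rightarrow> 'a \<Rightarrow> real) set
    \<Rightarrow> ('e \<Rightarrow> 'a \<Rightarrow> 'k::real_normed_field) \<Rightarrow> bool" where
  "in_min_dual M Ps f \<longleftrightarrow> (\<forall>G. Tc_open M G \<longrightarrow> Teps_open M Ps (f -` G))"

definition P_atom :: "'a measure \<Rightarrow> 'a set \<Rightarrow> bool" where
  "P_atom M A \<longleftrightarrow> A \<in> sets M \<and> measure M A > 0 \<and>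
     (\<forall>B\<in>sets M. B \<subseteq> A \<longrightarrow> measure M B = 0 \<or> measure M (A - B) = 0)"

end

theory Submission
  imports Defs
begin

lemma normQ_empty[simp]: "normQ {} x \<omega> = 0" by (simp add: normQ_def)

lemma normQ_insert:
  assumes "finite Q" shows "normQ (insert N Q) x \<omega> = max (N x \<omega>) (normQ Q x \<omega>)"
  using assms by (cases "Q = {}") (auto simp: normQ_def max.left_commute max.commute)

lemma normQ_nonneg: "finite Q \<Longrightarrow> 0 \<le> normQ Q x \<omega>"
  by (auto simp: normQ_def intro!: Max_ge)

lemma normQ_mono: "finite Q' \<Longrightarrow> Q \<subseteq> Q' \<Longrightarrow> normQ Q x \<omega> \<le> normQ Q' x \<omega>"
  unfolding normQ_def by (rule Max_mono) auto

lemma normQ_meas: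
  assumes "finite Q" "\<And>N. N \<in> Q \<Longrightarrow> N x \<in> borel_measurable M"
  shows "normQ Q x \<in> borel_measurable M"
  using assms
proof (induction Q rule: finite_induct)
  case empty then show ?case by simp
next
  case (insert N Q)
  have "normQ (insert N Q) x = (\<lambda>\<omega>. max (N x \<omega>) (normQ Q x \<omega>))"
    using insert by (simp add: normQ_insert fun_eq_iff)
  then show ?case using insert by simp
qed

lemma normQ_scale:
  assumes "finite Q" "\<And>N. N \<in> Q \<Longrightarrow> AE \<omega> in M. N y \<omega> = c \<omega> * N x \<omega>" "\<And>\<omega>. 0 \<le> c \<omega>"
  shows "AE \<omega> in M. normQ Q y \<omega> = c \<omega> * normQ Q x \<omega>"
  using assms
proof (induction Q rule: finite_induct)
  case empty then show ?case by simp
next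
  case (insert N Q)
  have "AE \<omega> in M. normQ Q y \<omega> = c \<omega> * normQ Q x \<omega>" using insert by auto
  moreover have "AE \<omega> in M. N y \<omega> = c \<omega> * N x \<omega>" using insert by auto
  ultimately show ?case
  proof eventually_elim
    case (elim \<omega>)
    then show ?case using insert(1) \<open>0 \<le> c \<omega>\<close>
      by (simp add: normQ_insert max_mult_distrib_left)
  qed
qed

context prob_space begin

lemma atom_AE:
  assumes "P_atom M A" "B \<in> events" "prob (A \<inter> B) > 0"
  shows "AE \<omega> in M. \<omega> \<in> A \<longrightarrow> \<omega> \<in> B"
proof -
  have A: "A \<in> events" using assms(1) by (simp add: P_atom_def)
  have "A \<inter> B \<in> events" "A \<inter> B \<subseteq> A" using A assms(2) by auto
  hence "prob (A - (A \<inter> B)) = 0" using assms(1,3) unfolding P_atom_def by force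
  moreover have "A - (A \<inter> B) = A - B" by blast
  ultimately have "prob (A - B) = 0" by simp
  hence "AE \<omega> in M. \<omega> \<notin> A - B" using A assms(2) prob_eq_0 by blast
  thus ?thesis by eventually_elim auto
qed

lemma atom_countable_cover:
  assumes "P_atom M A" "\<And>m::nat. D m \<in> events" "AE \<omega> in M. \<omega> \<in> A \<longrightarrow> (\<exists>m. \<omega> \<in> D m)"
  shows "\<exists>m. AE \<omega> in M. \<omega> \<in> A \<longrightarrow> \<omega> \<in> D m"
proof (rule ccontr)
  assume na: "\<not> ?thesis"
  have A: "A \<in> events" using assms(1) by (simp add: P_atom_def)
  have "\<forall>m. prob (A \<inter> D m) = 0"
  proof
    fix m
    show "prob (A \<inter> D m) = 0"
    proof (rule ccontr)
      assume "prob (A \<inter> D m) \<noteq> 0"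
      hence "prob (A \<inter> D m) > 0" using measure_nonneg[of M "A \<inter> D m"] by linarith
      thus False using na atom_AE[OF assms(1) assms(2)] by blast
    qed
  qed
  hence "\<forall>m. AE \<omega> in M. \<omega> \<notin> A \<inter> D m" using prob_eq_0 A assms(2) by blast
  hence "AE \<omega> in M. \<forall>m. \<omega> \<notin> A \<inter> D m" by (rule AE_all_countable[THEN iffD2])
  with assms(3) have "AE \<omega> in M. \<omega> \<notin> A" by eventually_elim auto
  hence "prob A = 0" using prob_eq_0 A by blast
  thus False using assms(1) by (simp add: P_atom_def)
qed

lemma small_or_atom:
  assumes lam: "0 < lam" and B: "B \<in> events" "0 < prob B"
  shows "(\<exists>C\<in>events. C \<subseteq> B \<and> 0 < prob C \<and> prob C < lam) \<or>
         (\<exists>A. P_atom M A \<and> A \<subseteq> B \<and> lam \<le> prob A)"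
proof -
  have ind: "\<forall>B. B \<in> events \<longrightarrow> 0 < prob B \<longrightarrow> prob B < lam * 2^k \<longrightarrow>
     (\<exists>C\<in>events. C \<subseteq> B \<and> 0 < prob C \<and> prob C < lam) \<or>
     (\<exists>A. P_atom M A \<and> A \<subseteq> B \<and> lam \<le> prob A)" for k
  proof (induction k)
    case 0
    then show ?case by auto
  next
    case (Suc k)
    show ?case
    proof (intro allI impI)
      fix B assume B: "B \<in> events" "0 < prob B" "prob B < lam * 2 ^ Suc k"
      show "(\<exists>C\<in>events. C \<subseteq> B \<and> 0 < prob C \<and> prob C < lam) \<or>
            (\<exists>A. P_atom M A \<and> A \<subseteq> B \<and> lam \<le> prob A)"
      proof (cases "P_atom M B")
        case True
        show ?thesis
        proof (cases "lam \<le> prob B")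
          case True then show ?thesis using \<open>P_atom M B\<close> by blast
        next
          case False then show ?thesis using B by (intro disjI1 bexI[of _ B]) auto
        qed
      next
        case False
        then obtain B1 where B1: "B1 \<in> events" "B1 \<subseteq> B" "prob B1 \<noteq> 0" "prob (B - B1) \<noteq> 0"
          using B unfolding P_atom_def by auto
        have eq: "prob (B - B1) = prob B - prob B1" using finite_measure_Diff B1 B by blast
        have p1: "0 < prob B1" "0 < prob (B - B1)" using B1 measure_nonneg[of M B1] measure_nonneg[of M "B - B1"] by linarith+
        have "prob B1 < lam * 2^k \<or> prob (B - B1) < lam * 2^k" using eq B(3) by auto
        moreover have "B - B1 \<in> events" using B B1 by auto
        ultimately have "(\<exists>C\<in>events. C \<subseteq> B1 \<and> 0 < prob C \<and> prob C < lam) \<or>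
            (\<exists>A. P_atom M A \<and> A \<subseteq> B1 \<and> lam \<le> prob A) \<or>
            (\<exists>C\<in>events. C \<subseteq> B - B1 \<and> 0 < prob C \<and> prob C < lam) \<or>
            (\<exists>A. P_atom M A \<and> A \<subseteq> B - B1 \<and> lam \<le> prob A)"
          using Suc.IH B1(1) p1 by blast
        then show ?thesis using B1(2) by blast
      qed
    qed
  qed
  obtain k where "1 / lam < 2 ^ k" using real_arch_pow[of "2::real" "1/lam"] by auto
  hence "1 < lam * 2^k" using lam by (simp add: field_simps)
  moreover have "prob B \<le> 1" by (rule prob_le_1)
  ultimately have "prob B < lam * 2^k" by linarith
  then show ?thesis using ind[of k] B by blast
qed


lemma suff:
  fixes smul :: "('a \<Rightarrow> 'k::real_normed_field) \<Rightarrow> 'e::ab_group_add \<Rightarrow> 'e" and f :: "'e \<Rightarrow> 'a \<Rightarrow> 'k" and n :: nat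
  assumes semi: "\<forall>N\<in>Ps. L0_seminorm M smul N"
    and hom: "L0_hom M smul f"
    and data: "\<forall>i<n. P_atom M (A i) \<and> \<xi> i \<in> borel_measurable M \<and> (AE \<omega> in M. 0 \<le> \<xi> i \<omega>) \<and>
              finite (Q i) \<and> Q i \<subseteq> Ps"
    and bound: "\<forall>x. AE \<omega> in M. norm (f x \<omega>) \<le>
              (\<Sum>i<n. indicator (A i) \<omega> * \<xi> i \<omega> * normQ (Q i) x \<omega>)"
  shows "in_min_dual M Ps f"
  unfolding in_min_dual_def Teps_open_def
proof (intro allI impI ballI)
  fix G x assume G: "Tc_open M G" and x: "x \<in> f -` G"
  have fxG: "f x \<in> G" using x by simp
  obtain e where e_meas: "e \<in> borel_measurable M" and e_pos: "AE \<omega> in M. 0 < e \<omega>"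
     and ball: "\<And>h. h \<in> L0 M \<Longrightarrow> (AE \<omega> in M. norm (h \<omega> - f x \<omega>) \<le> e \<omega>) \<Longrightarrow> h \<in> G"
    using G fxG unfolding Tc_open_def by blast
  define S where "S = (\<lambda>\<omega>. \<Sum>j<n. \<xi> j \<omega>)"
  have S_meas: "S \<in> borel_measurable M" unfolding S_def
    by (rule borel_measurable_sum) (use data in auto)
  have Aev: "\<And>i. i < n \<Longrightarrow> A i \<in> events" using data by (auto simp: P_atom_def)
  have "\<forall>i<n. \<exists>c::nat. AE \<omega> in M. \<omega> \<in> A i \<longrightarrow> inverse (real (Suc c)) \<le> e \<omega>"
  proof (intro allI impI)
    fix i assume i: "i < n"
    have cov: "AE \<omega> in M. \<omega> \<in> A i \<longrightarrow> (\<exists>m. \<omega> \<in> {\<omega>\<in>space M. inverse (real (Suc m)) \<le> e \<omega>})"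
      using e_pos AE_space
    proof eventually_elim
      case (elim \<omega>)
      then obtain m where "inverse (real (Suc m)) < e \<omega>" using reals_Archimedean by blast
      with elim show ?case by (auto intro!: exI[of _ m])
    qed
    obtain m where "AE \<omega> in M. \<omega> \<in> A i \<longrightarrow> \<omega> \<in> {\<omega>\<in>space M. inverse (real (Suc m)) \<le> e \<omega>}"
      using atom_countable_cover[OF _ _ cov] data i e_meas by auto
    hence "AE \<omega> in M. \<omega> \<in> A i \<longrightarrow> inverse (real (Suc m)) \<le> e \<omega>" by eventually_elim blast
    then show "\<exists>c::nat. AE \<omega> in M. \<omega> \<in> A i \<longrightarrow> inverse (real (Suc c)) \<le> e \<omega>" by blast
  qed
  then obtain ce where ce: "\<forall>i<n. AE \<omega> in M. \<omega> \<in> A i \<longrightarrow> inverse (real (Suc (ce i))) \<le> e \<omega>"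
    by metis
  have "\<forall>i<n. \<exists>c::nat. AE \<omega> in M. \<omega> \<in> A i \<longrightarrow> S \<omega> \<le> real c"
  proof (intro allI impI)
    fix i assume i: "i < n"
    have cov: "AE \<omega> in M. \<omega> \<in> A i \<longrightarrow> (\<exists>m. \<omega> \<in> {\<omega>\<in>space M. S \<omega> \<le> real m})"
      using AE_space
    proof eventually_elim
      case (elim \<omega>)
      obtain m where "S \<omega> \<le> real m" using real_arch_simple by blast
      with elim show ?case by (auto intro!: exI[of _ m])
    qed
    obtain m where "AE \<omega> in M. \<omega> \<in> A i \<longrightarrow> \<omega> \<in> {\<omega>\<in>space M. S \<omega> \<le> real m}"
      using atom_countable_cover[OF _ _ cov] data i S_meas by auto
    hence "AE \<omega> in M. \<omega> \<in> A i \<longrightarrow> S \<omega> \<le> real m" by eventually_elim blast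
    then show "\<exists>c::nat. AE \<omega> in M. \<omega> \<in> A i \<longrightarrow> S \<omega> \<le> real c" by blast
  qed
  then obtain cs where cs: "\<forall>i<n. AE \<omega> in M. \<omega> \<in> A i \<longrightarrow> S \<omega> \<le> real (cs i)"
    by metis
  define eps where "eps i = inverse (real (Suc (ce i)))" for i
  define \<delta> where "\<delta> = Min (insert 1 ((\<lambda>i. eps i / (real (cs i) + 1)) ` {..<n}))"
  define lam where "lam = Min (insert (1/2) ((\<lambda>i. prob (A i) / 2) ` {..<n}))"
  define Q' where "Q' = \<Union> (Q ` {..<n})"
  have eps_pos: "0 < eps i" for i unfolding eps_def by simp
  have \<delta>_pos: "0 < \<delta>" unfolding \<delta>_def using eps_pos
    by (subst Min_gr_iff) (auto intro: divide_pos_pos)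
  have \<delta>_le: "\<delta> \<le> eps i / (real (cs i) + 1)" if "i < n" for i
    unfolding \<delta>_def using that by (intro Min_le) auto
  have probA: "0 < prob (A i)" if "i < n" for i using data that by (auto simp: P_atom_def)
  have lam_pos: "0 < lam" unfolding lam_def using probA by (subst Min_gr_iff) auto
  have lam_le: "lam \<le> 1/2" unfolding lam_def by (intro Min_le) auto
  have lam_leA: "lam \<le> prob (A i) / 2" if "i < n" for i unfolding lam_def using that by (intro Min_le) auto
  have Q'_fin: "finite Q'" "Q' \<subseteq> Ps" unfolding Q'_def using data by auto
  show "\<exists>Q \<epsilon> lam. finite Q \<and> Q \<subseteq> Ps \<and> 0 < \<epsilon> \<and> 0 < lam \<and> lam < 1 \<and>
          (\<forall>y. 1 - lam < prob {\<omega> \<in> space M. normQ Q y \<omega> < \<epsilon>} \<longrightarrow> x + y \<in> f -` G)"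
  proof (intro exI conjI allI impI)
    show "finite Q'" "Q' \<subseteq> Ps" "0 < \<delta>" "0 < lam" "lam < 1" using Q'_fin \<delta>_pos lam_pos lam_le by auto
    fix y assume Py: "1 - lam < prob {\<omega> \<in> space M. normQ Q' y \<omega> < \<delta>}"
    define Sy where "Sy = {\<omega> \<in> space M. normQ Q' y \<omega> < \<delta>}"
    have ny: "normQ Q' y \<in> borel_measurable M"
      using Q'_fin semi by (intro normQ_meas) (auto simp: L0_seminorm_def)
    have Sy_ev: "Sy \<in> events" unfolding Sy_def using ny by measurable
    have "AE \<omega> in M. \<omega> \<in> A i \<longrightarrow> \<omega> \<in> Sy" if i: "i < n" for i
    proof (rule atom_AE)
      show "P_atom M (A i)" using data i by auto
      show "Sy \<in> events" by fact
      have "prob (A i \<union> Sy) = prob (A i) + prob (Sy - A i)" using finite_measure_Union' Aev[OF i] Sy_ev by blast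
      moreover have "prob (Sy - A i) = prob Sy - prob (Sy \<inter> A i)" using finite_measure_Diff' Aev[OF i] Sy_ev by blast
      moreover have "prob (A i \<union> Sy) \<le> 1" by (rule prob_le_1)
      moreover have "prob (Sy \<inter> A i) = prob (A i \<inter> Sy)" by (simp add: Int_commute)
      moreover have "1 - lam < prob Sy" using Py unfolding Sy_def .
      ultimately show "prob (A i \<inter> Sy) > 0" using lam_leA[OF i] probA[OF i] by linarith
    qed
    hence h1: "AE \<omega> in M. \<forall>i\<in>{..<n}. \<omega> \<in> A i \<longrightarrow> \<omega> \<in> Sy" by (intro AE_finite_allI) auto
    have h2: "AE \<omega> in M. \<forall>i\<in>{..<n}. \<omega> \<in> A i \<longrightarrow> eps i \<le> e \<omega>"
      using ce unfolding eps_def by (intro AE_finite_allI) auto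
    have h3: "AE \<omega> in M. \<forall>i\<in>{..<n}. \<omega> \<in> A i \<longrightarrow> S \<omega> \<le> real (cs i)"
      using cs by (intro AE_finite_allI) auto
    have h4: "AE \<omega> in M. \<forall>i\<in>{..<n}. 0 \<le> \<xi> i \<omega>"
      using data by (intro AE_finite_allI) auto
    have h5: "AE \<omega> in M. norm (f y \<omega>) \<le> (\<Sum>i<n. indicator (A i) \<omega> * \<xi> i \<omega> * normQ (Q i) y \<omega>)"
      using bound by auto
    have h6: "AE \<omega> in M. f (x + y) \<omega> = f x \<omega> + f y \<omega>" using hom by (auto simp: L0_hom_def aeq_def)
    have "AE \<omega> in M. norm (f (x + y) \<omega> - f x \<omega>) \<le> e \<omega>"
      using h1 h2 h3 h4 h5 h6 e_pos
    proof eventually_elim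
      case (elim \<omega>)
      have "norm (f (x + y) \<omega> - f x \<omega>) = norm (f y \<omega>)" using elim by simp
      also have "\<dots> \<le> e \<omega>"
      proof (cases "\<exists>k<n. \<omega> \<in> A k")
        case False
        hence "(\<Sum>i<n. indicator (A i) \<omega> * \<xi> i \<omega> * normQ (Q i) y \<omega>) = 0"
          by (intro sum.neutral) auto
        then show ?thesis using elim by simp
      next
        case True
        then obtain k where k: "k < n" "\<omega> \<in> A k" by blast
        have "(\<Sum>i<n. indicator (A i) \<omega> * \<xi> i \<omega> * normQ (Q i) y \<omega>) \<le> (\<Sum>i<n. \<xi> i \<omega> * \<delta>)"
        proof (rule sum_mono)
          fix i assume i: "i \<in> {..<n}"
          show "indicator (A i) \<omega> * \<xi> i \<omega> * normQ (Q i) y \<omega> \<le> \<xi> i \<omega> * \<delta>"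
          proof (cases "\<omega> \<in> A i")
            case True
            have "normQ (Q i) y \<omega> \<le> normQ Q' y \<omega>" using Q'_fin i unfolding Q'_def
              by (intro normQ_mono) auto
            also have "\<dots> < \<delta>" using elim(1) True i unfolding Sy_def by auto
            finally show ?thesis using True elim(4) i by (simp add: mult_left_mono)
          next
            case False
            then show ?thesis using elim(4) i \<delta>_pos by simp
          qed
        qed
        also have "\<dots> = S \<omega> * \<delta>" unfolding S_def by (simp add: sum_distrib_right)
        also have "\<dots> \<le> real (cs k) * \<delta>" using elim(3) k \<delta>_pos by (simp add: mult_right_mono)
        also have "\<dots> \<le> real (cs k) * (eps k / (real (cs k) + 1))" using mult_left_mono[OF \<delta>_le[OF k(1)], of "real (cs k)"] by simp
        also have "\<dots> \<le> eps k"
          using eps_pos[of k] by (simp add: divide_le_eq algebra_simps)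
        also have "\<dots> \<le> e \<omega>" using elim(2) k by auto
        finally show ?thesis using elim(5) by linarith
      qed
      finally show ?case .
    qed
    moreover have "f (x + y) \<in> L0 M" using hom by (simp add: L0_hom_def)
    ultimately show "x + y \<in> f -` G" using ball by auto
  qed
qed


lemma nec:
  fixes smul :: "('a \<Rightarrow> 'k::real_normed_field) \<Rightarrow> 'e::ab_group_add \<Rightarrow> 'e" and f :: "'e \<Rightarrow> 'a \<Rightarrow> 'k"
  assumes semi: "\<forall>N\<in>Ps. L0_seminorm M smul N"
    and hom: "L0_hom M smul f"
    and cont: "in_min_dual M Ps f"
  shows "\<exists>(n::nat) A \<xi> Q.
       (\<forall>i<n. P_atom M (A i) \<and> \<xi> i \<in> borel_measurable M \<and> (AE \<omega> in M. 0 \<le> \<xi> i \<omega>) \<and>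
              finite (Q i) \<and> Q i \<subseteq> Ps) \<and>
       (\<forall>x. AE \<omega> in M. norm (f x \<omega>) \<le>
              (\<Sum>i<n. indicator (A i) \<omega> * \<xi> i \<omega> * normQ (Q i) x \<omega>))"
proof -
  define G :: "('a \<Rightarrow> 'k) set" where "G = {h \<in> L0 M. AE \<omega> in M. norm (h \<omega>) < (1::real)}"
  have "Tc_open M G"
    unfolding Tc_open_def
  proof (intro conjI ballI impI)
    show "G \<subseteq> L0 M" unfolding G_def by auto
  next
    fix g h assume g: "g \<in> G" and h: "h \<in> L0 M" and gh: "aeq M g h"
    have "AE \<omega> in M. norm (g \<omega>) < 1" using g unfolding G_def by blast
    moreover have "AE \<omega> in M. g \<omega> = h \<omega>" using gh unfolding aeq_def .
    ultimately have "AE \<omega> in M. norm (h \<omega>) < 1" by eventually_elim simp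
    then show "h \<in> G" using h unfolding G_def by auto
  next
    fix g assume g: "g \<in> G"
    have gm: "g \<in> borel_measurable M" using g unfolding G_def L0_def by auto
    show "\<exists>\<epsilon>\<in>borel_measurable M. (AE \<omega> in M. 0 < \<epsilon> \<omega>) \<and>
        (\<forall>h\<in>L0 M. (AE \<omega> in M. norm (h \<omega> - g \<omega>) \<le> \<epsilon> \<omega>) \<longrightarrow> h \<in> G)"
    proof (intro bexI conjI ballI impI)
      show "(\<lambda>\<omega>. (1 - norm (g \<omega>)) / 2) \<in> borel_measurable M" using gm by measurable
      show "AE \<omega> in M. 0 < (1 - norm (g \<omega>)) / 2" proof -
        have "AE \<omega> in M. norm (g \<omega>) < 1" using g unfolding G_def by blast
        thus ?thesis by eventually_elim simp
      qed
      fix h assume h: "h \<in> L0 M" and hg: "AE \<omega> in M. norm (h \<omega> - g \<omega>) \<le> (1 - norm (g \<omega>)) / 2"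
      have "AE \<omega> in M. norm (h \<omega>) < 1" using hg g unfolding G_def
      proof -
        have "AE \<omega> in M. norm (g \<omega>) < 1" using g unfolding G_def by auto
        with hg show ?thesis
        proof eventually_elim
          case (elim \<omega>)
          have "norm (h \<omega>) \<le> norm (g \<omega>) + norm (h \<omega> - g \<omega>)" by (rule norm_triangle_sub)
          moreover have "\<And>a b c::real. a \<le> b + c \<Longrightarrow> c \<le> (1 - b)/2 \<Longrightarrow> b < 1 \<Longrightarrow> a < 1" by argo
          ultimately show ?case using elim by blast
        qed
      qed
      then show "h \<in> G" using h unfolding G_def by auto
    qed
  qed
  hence T: "Teps_open M Ps (f -` G)" using cont unfolding in_min_dual_def by blast
  have f0: "AE \<omega> in M. f 0 \<omega> = 0"
  proof -
    have "AE \<omega> in M. f (0 + 0) \<omega> = f 0 \<omega> + f 0 \<omega>" using hom unfolding L0_hom_def aeq_def by blast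
    thus ?thesis by eventually_elim simp
  qed
  have "AE \<omega> in M. norm (f 0 \<omega>) < 1" using f0 by eventually_elim simp
  moreover have "f 0 \<in> L0 M" using hom unfolding L0_hom_def by blast
  ultimately have "0 \<in> f -` G" unfolding G_def by blast
  hence "\<exists>Q \<epsilon> lam. finite Q \<and> Q \<subseteq> Ps \<and> 0 < \<epsilon> \<and> 0 < lam \<and> lam < 1 \<and>
        (\<forall>y. measure M {\<omega> \<in> space M. normQ Q y \<omega> < \<epsilon>} > 1 - lam \<longrightarrow> 0 + y \<in> f -` G)"
    using T unfolding Teps_open_def by (rule bspec[rotated])
  then obtain Q \<epsilon> lam where Q: "finite Q" "Q \<subseteq> Ps" and \<epsilon>: "0 < \<epsilon>" and lam: "0 < lam" "lam < 1"
    and Tq': "\<forall>y. measure M {\<omega> \<in> space M. normQ Q y \<omega> < \<epsilon>} > 1 - lam \<longrightarrow> 0 + y \<in> f -` G"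
    by (elim exE conjE) (rule that)
  have Tq: "0 + y \<in> f -` G" if "measure M {\<omega> \<in> space M. normQ Q y \<omega> < \<epsilon>} > 1 - lam" for y
    using Tq' that by blast
  have nmeas: "normQ Q y \<in> borel_measurable M" for y
    using Q semi by (intro normQ_meas) (auto simp: L0_seminorm_def)
  have K: "AE \<omega> in M. norm (f y \<omega>) < 1"
    if C: "C \<in> events" "prob C < lam" and Cy: "AE \<omega> in M. \<omega> \<notin> C \<longrightarrow> normQ Q y \<omega> < \<epsilon>" for y C
  proof -
    define Sy where "Sy = {\<omega> \<in> space M. normQ Q y \<omega> < \<epsilon>}"
    have Sy: "Sy \<in> events" unfolding Sy_def using nmeas[of y] by measurable
    have "AE \<omega> in M. \<omega> \<in> space M - C \<longrightarrow> \<omega> \<in> Sy" using Cy AE_space by eventually_elim (auto simp: Sy_def)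
    hence "prob (space M - C) \<le> prob Sy" using Sy by (intro finite_measure_mono_AE) auto
    moreover have "prob (space M - C) = 1 - prob C" using prob_compl C by blast
    ultimately have "prob Sy > 1 - lam" using C by linarith
    hence "0 + y \<in> f -` G" using Tq unfolding Sy_def by blast
    hence "y \<in> f -` G" by simp
    thus ?thesis unfolding G_def by auto
  qed
  have scale: "AE \<omega> in M. norm (\<xi> \<omega> * f x \<omega>) < 1"
    if \<xi>: "\<xi> \<in> L0 M" and C: "C \<in> events" "prob C < lam"
      and Cy: "\<And>\<omega>. \<omega> \<notin> C \<Longrightarrow> norm (\<xi> \<omega>) * normQ Q x \<omega> < \<epsilon>" for \<xi> x C
  proof -
    have "AE \<omega> in M. normQ Q (smul \<xi> x) \<omega> = norm (\<xi> \<omega>) * normQ Q x \<omega>"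
      using Q semi \<xi> by (intro normQ_scale) (auto simp: L0_seminorm_def)
    hence "AE \<omega> in M. \<omega> \<notin> C \<longrightarrow> normQ Q (smul \<xi> x) \<omega> < \<epsilon>" by eventually_elim (use Cy in auto)
    hence "AE \<omega> in M. norm (f (smul \<xi> x) \<omega>) < 1" using K C by blast
    moreover have "AE \<omega> in M. f (smul \<xi> x) \<omega> = \<xi> \<omega> * f x \<omega>" using hom \<xi> unfolding L0_hom_def aeq_def by blast
    ultimately show ?thesis by eventually_elim simp
  qed
  have small: "AE \<omega> in M. \<omega> \<in> C \<longrightarrow> f x \<omega> = 0" if C: "C \<in> events" "prob C < lam" for x C
  proof -
    have mm: "AE \<omega> in M. \<omega> \<in> C \<longrightarrow> real m * norm (f x \<omega>) < 1" for m :: nat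
    proof -
      define \<xi> where "\<xi> = (\<lambda>\<omega>. of_real (real m * indicator C \<omega>) :: 'k)"
      have "\<xi> \<in> L0 M" unfolding \<xi>_def L0_def using C by measurable
      hence "AE \<omega> in M. norm (\<xi> \<omega> * f x \<omega>) < 1" using C
        by (rule scale) (simp add: \<xi>_def \<epsilon>)
      thus ?thesis by eventually_elim (auto simp: \<xi>_def norm_mult indicator_def)
    qed
    have "AE \<omega> in M. \<forall>m::nat. \<omega> \<in> C \<longrightarrow> real m * norm (f x \<omega>) < 1"
      by (rule AE_all_countable[THEN iffD2]) (use mm in blast)
    thus ?thesis
    proof eventually_elim
      case (elim \<omega>)
      show ?case
      proof
        assume "\<omega> \<in> C"
        show "f x \<omega> = 0"
        proof (rule ccontr)
          assume "f x \<omega> \<noteq> 0"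
          hence "0 < norm (f x \<omega>)" by simp
          then obtain m where "1 < real m * norm (f x \<omega>)" using reals_Archimedean3 by blast
          with elim \<open>\<omega> \<in> C\<close> show False by (meson not_less_iff_gr_or_eq order_less_trans)
        qed
      qed
    qed
  qed
  have pbound: "AE \<omega> in M. norm (f x \<omega>) \<le> (2 / \<epsilon>) * normQ Q x \<omega>" for x
  proof -
    have mm: "AE \<omega> in M. 0 < q \<longrightarrow> normQ Q x \<omega> < \<epsilon> / real_of_rat q \<longrightarrow> real_of_rat q * norm (f x \<omega>) < 1" for q :: rat
    proof (cases "0 < q")
      case False then show ?thesis by simp
    next
      case True
      define t where "t = real_of_rat q"
      have t: "0 < t" using True unfolding t_def by simp
      define D where "D = {\<omega> \<in> space M. normQ Q x \<omega> < \<epsilon> / t}"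
      have D: "D \<in> events" unfolding D_def using nmeas[of x] by measurable
      define \<xi> where "\<xi> = (\<lambda>\<omega>. of_real (t * indicator D \<omega>) :: 'k)"
      have "\<xi> \<in> L0 M" unfolding \<xi>_def L0_def using D by measurable
      hence "AE \<omega> in M. norm (\<xi> \<omega> * f x \<omega>) < 1"
      proof (rule scale[of _ "{}" x])
        fix \<omega>
        show "norm (\<xi> \<omega>) * normQ Q x \<omega> < \<epsilon>"
        proof (cases "\<omega> \<in> D")
          case True
          hence "normQ Q x \<omega> < \<epsilon> / t" unfolding D_def by auto
          hence "t * normQ Q x \<omega> < \<epsilon>" using t by (simp add: field_simps)
          then show ?thesis using True t by (simp add: \<xi>_def norm_mult)
        next
          case False then show ?thesis using \<epsilon> by (simp add: \<xi>_def)
        qed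
      qed (use lam in auto)
      thus ?thesis
        using AE_space by eventually_elim (auto simp: \<xi>_def norm_mult t_def D_def abs_of_pos True indicator_def)
    qed
    have all: "AE \<omega> in M. \<forall>q::rat. 0 < q \<longrightarrow> normQ Q x \<omega> < \<epsilon> / real_of_rat q \<longrightarrow> real_of_rat q * norm (f x \<omega>) < 1"
      by (rule AE_all_countable[THEN iffD2]) (use mm in blast)
    show ?thesis using all
    proof eventually_elim
      case (elim \<omega>)
      define c where "c = normQ Q x \<omega>"
      have c0: "0 \<le> c" unfolding c_def using Q(1) by (rule normQ_nonneg)
      show ?case
      proof (cases "c = 0")
        case True
        have "norm (f x \<omega>) = 0"
        proof (rule ccontr)
          assume "norm (f x \<omega>) \<noteq> 0"
          hence pos: "0 < norm (f x \<omega>)" by simp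
          obtain m :: nat where m: "1 / norm (f x \<omega>) < real m" using reals_Archimedean2 by blast
          hence "0 < real m" using pos by (smt (verit) divide_pos_pos)
          hence "0 < (of_nat m :: rat)" by simp
          moreover have "c < \<epsilon> / real_of_rat (of_nat m)" using True \<epsilon> \<open>0 < real m\<close> by simp
          ultimately have "real m * norm (f x \<omega>) < 1" using spec[OF elim, of "of_nat m"] unfolding c_def by simp
          moreover have "1 < real m * norm (f x \<omega>)" using m pos by (simp add: field_simps)
          ultimately show False by linarith
        qed
        then show ?thesis using True c_def by simp
      next
        case False
        hence cpos: "0 < c" using c0 by simp
        have "\<epsilon> / (2 * c) < \<epsilon> / c" using cpos \<epsilon> by (simp add: field_simps)
        then obtain r where r: "r \<in> \<rat>" "\<epsilon> / (2 * c) < r" "r < \<epsilon> / c" using Rats_dense_in_real by blast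
        then obtain q where q: "r = real_of_rat q" by (auto elim: Rats_cases)
        have rpos: "0 < r" using r(2) cpos \<epsilon> by (smt (verit) divide_pos_pos)
        hence "0 < q" using q by simp
        moreover have "c < \<epsilon> / r" using r(3) rpos cpos by (simp add: field_simps)
        ultimately have "r * norm (f x \<omega>) < 1" using elim q unfolding c_def by blast
        hence "norm (f x \<omega>) < 1 / r" using rpos by (simp add: field_simps)
        also have "1 / r < 2 * c / \<epsilon>" using r(2) rpos cpos \<epsilon> by (simp add: field_simps)
        finally show ?thesis unfolding c_def by simp
      qed
    qed
  qed
  define fam where "fam n A \<longleftrightarrow>
     (\<forall>i<n. P_atom M (A i) \<and> lam \<le> prob (A i)) \<and> (\<forall>i<n. \<forall>j<n. i \<noteq> j \<longrightarrow> A i \<inter> A j = {})"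
     for n :: nat and A :: "nat \<Rightarrow> 'a set"
  have fam_bound: "real n * lam \<le> 1" if "fam n A" for n A
  proof -
    have at: "\<And>i. i < n \<Longrightarrow> A i \<in> events" "\<And>i. i < n \<Longrightarrow> lam \<le> prob (A i)"
      using that unfolding fam_def P_atom_def by auto
    have dj: "disjoint_family_on A {..<n}" using that unfolding fam_def disjoint_family_on_def by auto
    have "prob (\<Union> (A ` {..<n})) = (\<Sum>i<n. prob (A i))"
      by (rule measure_finite_Union) (use at dj in \<open>auto simp: emeasure_eq_measure\<close>)
    moreover have "(\<Sum>i<n. lam) \<le> (\<Sum>i<n. prob (A i))" by (rule sum_mono) (use at in auto)
    moreover have "prob (\<Union> (A ` {..<n})) \<le> 1" by (rule prob_le_1)
    ultimately show ?thesis by simp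
  qed
  define Ns where "Ns = {n. \<exists>A. fam n A}"
  have "Ns \<subseteq> {..nat \<lceil>1 / lam\<rceil>}"
  proof
    fix n assume "n \<in> Ns"
    then obtain A where "fam n A" unfolding Ns_def by blast
    hence "real n * lam \<le> 1" by (rule fam_bound)
    hence "real n \<le> 1 / lam" using lam by (simp add: field_simps)
    also have "\<dots> \<le> real (nat \<lceil>1 / lam\<rceil>)" by (rule real_nat_ceiling_ge)
    finally show "n \<in> {..nat \<lceil>1 / lam\<rceil>}" by simp
  qed
  hence finNs: "finite Ns" by (rule finite_subset) simp
  have "0 \<in> Ns" unfolding Ns_def fam_def by auto
  define n where "n = Max Ns"
  have "n \<in> Ns" unfolding n_def using finNs \<open>0 \<in> Ns\<close> by (intro Max_in) auto
  then obtain A where famA: "fam n A" unfolding Ns_def by blast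
  have nmax: "m \<le> n" if "fam m B" for m B
    using that finNs unfolding n_def Ns_def by (intro Max_ge) auto
  have Aev: "A i \<in> events" if "i < n" for i using famA that unfolding fam_def P_atom_def by auto
  have supp: "AE \<omega> in M. f x \<omega> \<noteq> 0 \<longrightarrow> (\<exists>i<n. \<omega> \<in> A i)" for x
  proof -
    have fxm: "f x \<in> borel_measurable M" using hom unfolding L0_hom_def L0_def by blast
    define T where "T = {\<omega> \<in> space M. f x \<omega> \<noteq> 0} - (\<Union>i<n. A i)"
    have Tev: "T \<in> events" unfolding T_def using fxm Aev by measurable
    have "prob T = 0"
    proof (rule ccontr)
      assume "prob T \<noteq> 0"
      hence "0 < prob T" using measure_nonneg[of M T] by linarith
      from small_or_atom[OF lam(1) Tev this] show False
      proof (elim disjE exE bexE conjE)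
        fix C assume C: "C \<in> events" "C \<subseteq> T" "0 < prob C" "prob C < lam"
        have "AE \<omega> in M. \<omega> \<in> C \<longrightarrow> f x \<omega> = 0" using small C by blast
        hence "AE \<omega> in M. \<omega> \<notin> C"
        proof eventually_elim
          case (elim \<omega>) thus ?case using C(2) unfolding T_def by blast
        qed
        hence "prob C = 0" using prob_eq_0 C(1) by blast
        thus False using C(3) by simp
      next
        fix A' assume A': "P_atom M A'" "A' \<subseteq> T" "lam \<le> prob A'"
        have AT: "A' \<inter> A k = {}" if "k < n" for k using A'(2) that unfolding T_def by blast
        have "fam (Suc n) (A(n := A'))"
          unfolding fam_def
        proof (rule conjI)
          show "\<forall>i<Suc n. P_atom M ((A(n := A')) i) \<and> lam \<le> prob ((A(n := A')) i)"
            using famA A' unfolding fam_def by (auto simp: less_Suc_eq)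
          show "\<forall>i<Suc n. \<forall>j<Suc n. i \<noteq> j \<longrightarrow> (A(n := A')) i \<inter> (A(n := A')) j = {}"
            using famA AT unfolding fam_def by (auto simp: less_Suc_eq)
        qed
        hence "Suc n \<le> n" by (rule nmax)
        thus False by simp
      qed
    qed
    hence "AE \<omega> in M. \<omega> \<notin> T" using prob_eq_0 Tev by blast
    thus ?thesis using AE_space by eventually_elim (auto simp: T_def)
  qed
  show ?thesis
  proof (intro exI conjI allI impI)
    fix i assume "i < n"
    show "P_atom M (A i)" using famA \<open>i < n\<close> unfolding fam_def by auto
    show "(\<lambda>_. 2 / \<epsilon>) \<in> borel_measurable M" by simp
    show "AE \<omega> in M. 0 \<le> 2 / \<epsilon>" using \<epsilon> by simp
    show "finite Q" "Q \<subseteq> Ps" using Q by auto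
  next
    fix x
    show "AE \<omega> in M. norm (f x \<omega>) \<le> (\<Sum>i<n. indicator (A i) \<omega> * (\<lambda>_. 2 / \<epsilon>) \<omega> * normQ Q x \<omega>)"
      using supp[of x] pbound[of x]
    proof eventually_elim
      case (elim \<omega>)
      have nn: "\<And>i. 0 \<le> indicator (A i) \<omega> * (2 / \<epsilon>) * normQ Q x \<omega>"
        using \<epsilon> normQ_nonneg[OF Q(1)] by simp
      show ?case
      proof (cases "f x \<omega> = 0")
        case True then show ?thesis using nn by (simp add: sum_nonneg)
      next
        case False
        then obtain j where j: "j < n" "\<omega> \<in> A j" using elim by blast
        have "norm (f x \<omega>) \<le> indicator (A j) \<omega> * (2 / \<epsilon>) * normQ Q x \<omega>" using elim j by simp
        also have "\<dots> \<le> (\<Sum>i<n. indicator (A i) \<omega> * (2 / \<epsilon>) * normQ Q x \<omega>)"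
          by (rule member_le_sum) (use j nn in auto)
        finally show ?thesis by simp
      qed
    qed
  qed
qed

end

theorem corollary3p1:
  fixes M :: "'a measure"
    and smul :: "('a \<Rightarrow> 'k::real_normed_field) \<Rightarrow> 'e::ab_group_add \<Rightarrow> 'e"
    and Ps :: "('e \<Rightarrow> 'a \<Rightarrow> real) set"
    and f :: "'e \<Rightarrow> 'a \<Rightarrow> 'k"
  assumes "prob_space M"
    and "random_lc_module M smul Ps"
    and "\<exists>A. P_atom M A"
    and "L0_hom M smul f"
  shows "in_min_dual M Ps f \<longleftrightarrow>
    (\<exists>(n::nat) A \<xi> Q.
       (\<forall>i<n. P_atom M (A i) \<and> \<xi> i \<in> borel_measurable M \<and> (AE \<omega> in M. 0 \<le> \<xi> i \<omega>) \<and>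
              finite (Q i) \<and> Q i \<subseteq> Ps) \<and>
       (\<forall>x. AE \<omega> in M. norm (f x \<omega>) \<le>
              (\<Sum>i<n. indicator (A i) \<omega> * \<xi> i \<omega> * normQ (Q i) x \<omega>)))"
proof -
  interpret prob_space M by (rule assms(1))
  have semi: "\<forall>N\<in>Ps. L0_seminorm M smul N" using assms(2) by (simp add: random_lc_module_def)
  show ?thesis
  proof
    assume "in_min_dual M Ps f"
    thus "\<exists>(n::nat) A \<xi> Q.
       (\<forall>i<n. P_atom M (A i) \<and> \<xi> i \<in> borel_measurable M \<and> (AE \<omega> in M. 0 \<le> \<xi> i \<omega>) \<and>
              finite (Q i) \<and> Q i \<subseteq> Ps) \<and>
       (\<forall>x. AE \<omega> in M. norm (f x \<omega>) \<le>
              (\<Sum>i<n. indicator (A i) \<omega> * \<xi> i \<omega> * normQ (Q i) x \<omega>))"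
      by (rule nec[OF semi assms(4)])
  next
    assume "\<exists>(n::nat) A \<xi> Q.
       (\<forall>i<n. P_atom M (A i) \<and> \<xi> i \<in> borel_measurable M \<and> (AE \<omega> in M. 0 \<le> \<xi> i \<omega>) \<and>
              finite (Q i) \<and> Q i \<subseteq> Ps) \<and>
       (\<forall>x. AE \<omega> in M. norm (f x \<omega>) \<le>
              (\<Sum>i<n. indicator (A i) \<omega> * \<xi> i \<omega> * normQ (Q i) x \<omega>))"
    then obtain n :: nat and A \<xi> Q where d:
      "\<forall>i<n. P_atom M (A i) \<and> \<xi> i \<in> borel_measurable M \<and> (AE \<omega> in M. 0 \<le> \<xi> i \<omega>) \<and>
              finite (Q i) \<and> Q i \<subseteq> Ps"
      "\<forall>x. AE \<omega> in M. norm (f x \<omega>) \<le>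
              (\<Sum>i<n. indicator (A i) \<omega> * \<xi> i \<omega> * normQ (Q i) x \<omega>)"
      by blast
    show "in_min_dual M Ps f" by (rule suff[OF semi assms(4) d])
  qed
qed

end
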